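(* If $K_1$ and $K_2$ are long virtual knots obtained from one another by a finite sequence of extended Reidemeister moves and band-pass moves, then $$v_{2,1}(K_1)+v_{2,2}(K_1)\equiv v_{2,1}(K_2)+v_{2,2}(K_2)\pmod 2.$$
   Context: Long virtual knots are immersions $\mathbb{R}\to\mathbb{R}^2$ agreeing with the $x$-axis outside a compact set, with double points marked classical or virtual, oriented from $-\infty$ to $\infty$, considered up to the extended Reidemeister moves (classical Reidemeister moves and the detour move). A band-pass move is the local move in which, inside a disk, one band (a pair of parallel strands of opposite orientation) crosses another such band at four classical crossings with the first band passing entirely over the second, and this is replaced by the configuration where the first band passes entirely under the second (both orientation versions of this move are allowed). Gauss diagram $D_K$ of a long virtual knot: the real line with one arrow for each classical crossing joining its two preimages, pointing from the overcrossing preimage to the undercrossing preimage, labeled with the local writhe sign $\pm1$. The Goussarov–Polyak–Viro degree-two invariants $v_{2,1},v_{2,2}$ are defined as follows: for each unordered pair of arrows $\{a,b\}$ of $D_K$ whose four endpoints $p_1<p_2<p_3<p_4$ on $\mathbb{R}$ satisfy that $a$ joins $p_1,p_3$ and $b$ joins $p_2,p_4$, the pair contributes $\mathrm{sign}(a)\,\mathrm{sign}(b)$ to $v_{2,1}(K)$ if $a$ points $p_1\to p_3$ and $b$ points $p_4\to p_2$, and contributes $\mathrm{sign}(a)\,\mathrm{sign}(b)$ to $v_{2,2}(K)$ if $a$ points $p_3\to p_1$ and $b$ points $p_2\to p_4$; other pairs contribute nothing. (Only the sum $v_{2,1}+v_{2,2}$ enters the statement.) *)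

theory Defs
  imports Main "HOL-Library.Multiset"
begin

text \<open>Gauss diagrams of long virtual knots, encoded as the word of arrow endpoints
  read along the real line from -infinity to +infinity.  An endpoint records the
  arrow it belongs to, whether it is the tail (overcrossing preimage) or the head
  (undercrossing preimage), and the writhe sign of the arrow (True = +1).\<close>

datatype ep = Ep (aid: nat) (is_tail: bool) (pos: bool)

type_synonym gauss = "ep list"

definition sg :: "ep \<Rightarrow> int" where
  "sg e = (if pos e then 1 else -1)"

definition wf_gauss :: "gauss \<Rightarrow> bool" where
  "wf_gauss D \<longleftrightarrow> distinct D \<and>
     (\<forall>i t s. Ep i t s \<in> set D \<longrightarrow> Ep i (\<not> t) s \<in> set D \<and> Ep i t (\<not> s) \<notin> set D)"

definition v21 :: "gauss \<Rightarrow> int" where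
  "v21 D = (\<Sum>(i,j,k,l) \<in> {(i,j,k,l). i < j \<and> j < k \<and> k < l \<and> l < length D \<and>
       aid (D!i) = aid (D!k) \<and> aid (D!j) = aid (D!l) \<and>
       is_tail (D!i) \<and> is_tail (D!l)}. sg (D!i) * sg (D!j))"

definition v22 :: "gauss \<Rightarrow> int" where
  "v22 D = (\<Sum>(i,j,k,l) \<in> {(i,j,k,l). i < j \<and> j < k \<and> k < l \<and> l < length D \<and>
       aid (D!i) = aid (D!k) \<and> aid (D!j) = aid (D!l) \<and>
       is_tail (D!k) \<and> is_tail (D!j)}. sg (D!i) * sg (D!j))"

text \<open>Local moves: a diagram is cut into gaps and segments
  x0 s1 x1 s2 ... sn xn; the segments are replaced, the gaps kept.\<close>
fun interl :: "'a list list \<Rightarrow> 'a list list \<Rightarrow> 'a list" where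
  "interl (x # xs) (s # ss) = x @ s @ interl xs ss"
| "interl [x] [] = x"
| "interl _ _ = []"

definition local_repl :: "gauss \<Rightarrow> gauss \<Rightarrow> ep list list \<Rightarrow> ep list list \<Rightarrow> bool" where
  "local_repl D D' segs segs' \<longleftrightarrow> length segs' = length segs \<and>
     (\<exists>xs. length xs = Suc (length segs) \<and> D = interl xs segs \<and> D' = interl xs segs')"

definition R1 :: "gauss \<Rightarrow> gauss \<Rightarrow> bool" where
  "R1 D D' \<longleftrightarrow> (\<exists>i t s. local_repl D D' [[Ep i t s, Ep i (\<not> t) s]] [[]])"

text \<open>Reidemeister II: deleting two arrows of opposite signs with both tails
  adjacent and both heads adjacent (strands parallel or antiparallel).\<close>
definition R2 :: "gauss \<Rightarrow> gauss \<Rightarrow> bool" where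
  "R2 D D' \<longleftrightarrow> (\<exists>i j s ori segs. i \<noteq> j \<and>
     mset segs = {# [Ep i True s, Ep j True (\<not> s)],
                    (if ori then [Ep i False s, Ep j False (\<not> s)]
                            else [Ep j False (\<not> s), Ep i False s]) #} \<and>
     local_repl D D' segs [[], []])"

text \<open>Reidemeister III: three strands top T, middle M, bottom B, arrows
  a (T over M), b (T over B), c (M over B); each of the three segments
  has its two endpoints reversed.  The sign/order conditions are exactly
  those realized by three lines in the plane around a small triangle.
  xT: T meets M before B; xM: M meets T before B; xB: B meets T before M.\<close>
definition R3 :: "gauss \<Rightarrow> gauss \<Rightarrow> bool" where
  "R3 D D' \<longleftrightarrow> (\<exists>a b c sa sb sc xT xM xB segs. distinct [a, b, c] \<and>
     ((sa = sb) \<longleftrightarrow> (xM = xB)) \<and> ((sb = sc) \<longleftrightarrow> (xT = xM)) \<and>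
     mset segs = {# (if xT then [Ep a True sa, Ep b True sb] else [Ep b True sb, Ep a True sa]),
                    (if xM then [Ep a False sa, Ep c True sc] else [Ep c True sc, Ep a False sa]),
                    (if xB then [Ep b False sb, Ep c False sc] else [Ep c False sc, Ep b False sb]) #} \<and>
     local_repl D D' segs (map rev segs))"

definition relabel :: "gauss \<Rightarrow> gauss \<Rightarrow> bool" where
  "relabel D D' \<longleftrightarrow> (\<exists>f. inj f \<and> D' = map (\<lambda>e. Ep (f (aid e)) (is_tail e) (pos e)) D)"

text \<open>Crossing change at an arrow: reverse it and negate its sign.\<close>
definition flip_ep :: "ep \<Rightarrow> ep" where
  "flip_ep e = Ep (aid e) (\<not> is_tail e) (\<not> pos e)"

text \<open>Band-pass move: strands a1, a2 (band A, antiparallel) pass over strands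
  b1, b2 (band B, antiparallel) at four crossings; arrow p_kl joins a_k to b_l.
  a1 meets b1 then b2, a2 meets b2 then b1; b1 meets a1 then a2 (ori) or the
  reverse, b2 in the opposite order; signs of p11, p22 equal s, of p12, p21
  equal -s.  The move makes band A pass under band B: all four crossings are
  switched.\<close>
definition BP :: "gauss \<Rightarrow> gauss \<Rightarrow> bool" where
  "BP D D' \<longleftrightarrow> (\<exists>p11 p12 p21 p22 s ori segs. distinct [p11, p12, p21, p22] \<and>
     mset segs = {# [Ep p11 True s, Ep p12 True (\<not> s)],
                    [Ep p22 True s, Ep p21 True (\<not> s)],
                    (if ori then [Ep p11 False s, Ep p21 False (\<not> s)]
                            else [Ep p21 False (\<not> s), Ep p11 False s]),
                    (if ori then [Ep p22 False s, Ep p12 False (\<not> s)]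
                            else [Ep p12 False (\<not> s), Ep p22 False s]) #} \<and>
     local_repl D D' segs (map (map flip_ep) segs))"

definition ext_bp_step :: "gauss \<Rightarrow> gauss \<Rightarrow> bool" where
  "ext_bp_step D D' \<longleftrightarrow> wf_gauss D \<and> wf_gauss D' \<and>
     (R1 D D' \<or> R1 D' D \<or> R2 D D' \<or> R2 D' D \<or> R3 D D' \<or> R3 D' D \<or>
      relabel D D' \<or> relabel D' D \<or> BP D D' \<or> BP D' D)"

end

theory Submission
  imports Defs
begin

definition Arr :: "gauss \<Rightarrow> nat set" where "Arr D = aid ` set D"
definition tp :: "gauss \<Rightarrow> nat \<Rightarrow> nat" where
  "tp D a = (THE i. i < length D \<and> aid (D!i) = a \<and> is_tail (D!i))"
definition hp :: "gauss \<Rightarrow> nat \<Rightarrow> nat" where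
  "hp D a = (THE i. i < length D \<and> aid (D!i) = a \<and> \<not> is_tail (D!i))"

lemma wf_uniq:
  assumes "wf_gauss D" "i < length D" "j < length D" "aid (D!i) = aid (D!j)" "is_tail (D!i) = is_tail (D!j)"
  shows "i = j"
proof -
  obtain a t s where di: "D!i = Ep a t s" by (cases "D!i")
  obtain b u r where dj: "D!j = Ep b u r" by (cases "D!j")
  have ab: "b = a" "u = t" using assms(4,5) di dj by auto
  have "D!i \<in> set D" using assms(2) by simp
  then have ini: "Ep a t s \<in> set D" using di by simp
  have "D!j \<in> set D" using assms(3) by simp
  then have inj: "Ep a t r \<in> set D" using dj ab by simp
  have "r = s"
  proof (rule ccontr)
    assume "r \<noteq> s" then have "r = (\<not> s)" by auto
    then show False using assms(1) ini inj unfolding wf_gauss_def by blast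
  qed
  then have "D!i = D!j" using di dj ab by simp
  then show ?thesis using assms(1,2,3) unfolding wf_gauss_def by (simp add: nth_eq_iff_index_eq)
qed

lemma wf_ex:
  assumes "wf_gauss D" "a \<in> Arr D"
  shows "\<exists>i<length D. aid (D!i) = a \<and> is_tail (D!i) = t"
proof -
  obtain e where e: "e \<in> set D" "aid e = a" using assms(2) unfolding Arr_def by auto
  obtain u s where ee: "e = Ep a u s" using e(2) by (cases e) auto
  have "Ep a t s \<in> set D"
  proof (cases "u = t")
    case True then show ?thesis using e ee by simp
  next
    case False then have tu: "t = (\<not> u)" by auto
    have "Ep a u s \<in> set D" using e ee by simp
    then have "Ep a (\<not> u) s \<in> set D" using assms(1) unfolding wf_gauss_def by blast
    then show ?thesis using tu by simp
  qed
  then show ?thesis by (metis ep.sel(1) ep.sel(2) in_set_conv_nth)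
qed

lemma tp_eqI: "wf_gauss D \<Longrightarrow> i < length D \<Longrightarrow> aid (D!i) = a \<Longrightarrow> is_tail (D!i) \<Longrightarrow> tp D a = i"
  unfolding tp_def by (rule the_equality) (auto intro: wf_uniq)

lemma hp_eqI: "wf_gauss D \<Longrightarrow> i < length D \<Longrightarrow> aid (D!i) = a \<Longrightarrow> \<not> is_tail (D!i) \<Longrightarrow> hp D a = i"
  unfolding hp_def by (rule the_equality) (auto intro: wf_uniq)

lemma tp_props: assumes "wf_gauss D" "a \<in> Arr D"
  shows "tp D a < length D \<and> aid (D!tp D a) = a \<and> is_tail (D!tp D a)"
proof -
  obtain i where "i < length D" "aid (D!i) = a" "is_tail (D!i) = True" using wf_ex[OF assms, of True] by blast
  then show ?thesis using tp_eqI[OF assms(1)] by auto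
qed

lemma hp_props: assumes "wf_gauss D" "a \<in> Arr D"
  shows "hp D a < length D \<and> aid (D!hp D a) = a \<and> \<not> is_tail (D!hp D a)"
proof -
  obtain i where "i < length D" "aid (D!i) = a" "is_tail (D!i) = False" using wf_ex[OF assms, of False] by blast
  then show ?thesis using hp_eqI[OF assms(1)] by auto
qed

lemma Arr_nth: "i < length D \<Longrightarrow> aid (D!i) \<in> Arr D"
  unfolding Arr_def by auto

lemma finite_Arr: "finite (Arr D)" unfolding Arr_def by simp

definition F :: "(nat \<Rightarrow> nat) \<Rightarrow> (nat \<Rightarrow> nat) \<Rightarrow> nat \<Rightarrow> nat \<Rightarrow> nat" where
  "F t h a b = (if t a < h b \<and> h b < h a \<and> h a < t b then 1 else 0) +
               (if h a < t b \<and> t b < t a \<and> t a < h b then 1 else 0)"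

definition N :: "gauss \<Rightarrow> nat" where
  "N D = (\<Sum>a\<in>Arr D. \<Sum>b\<in>Arr D. F (tp D) (hp D) a b)"

lemma sum_pm1_mod2:
  assumes "finite S" "\<forall>x\<in>S. f x = 1 \<or> f x = -1"
  shows "(\<Sum>x\<in>S. f x) mod 2 = int (card S) mod 2"
  using assms
proof (induction S rule: finite_induct)
  case empty then show ?case by simp
next
  case (insert x S)
  have fx: "f x mod 2 = 1" using insert.prems by auto
  have IH: "(\<Sum>y\<in>S. f y) mod 2 = int (card S) mod 2" using insert by simp
  have "(\<Sum>y\<in>insert x S. f y) mod 2 = (f x + (\<Sum>y\<in>S. f y)) mod 2" using insert by simp
  also have "\<dots> = (f x mod 2 + (\<Sum>y\<in>S. f y) mod 2) mod 2" by (simp add: mod_add_eq)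
  also have "\<dots> = (1 + int (card S)) mod 2" using fx IH by (simp add: mod_add_right_eq)
  also have "\<dots> = int (card (insert x S)) mod 2" using insert by simp
  finally show ?case .
qed

lemma sum_if_card:
  assumes "finite A"
  shows "(\<Sum>a\<in>A. \<Sum>b\<in>A. (if P a b then 1 else 0 :: nat)) = card {(a,b) \<in> A \<times> A. P a b}"
proof -
  have "(\<Sum>a\<in>A. \<Sum>b\<in>A. (if P a b then 1 else 0 :: nat)) = (\<Sum>(a,b)\<in>A\<times>A. if P a b then 1 else 0)"
    by (rule sum.cartesian_product)
  also have "\<dots> = (\<Sum>p\<in>A\<times>A. if case_prod P p then 1 else 0)"
    by (rule sum.cong) auto
  also have "\<dots> = (\<Sum>p\<in>{p\<in>A\<times>A. case_prod P p}. 1)"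
    using sum.inter_filter[of "A\<times>A" "\<lambda>_. 1::nat" "case_prod P"] assms by simp
  also have "\<dots> = card {p\<in>A\<times>A. case_prod P p}" by simp
  also have "{p\<in>A\<times>A. case_prod P p} = {(a,b) \<in> A \<times> A. P a b}" by auto
  finally show ?thesis .
qed

lemma N_card: "N D = card {(a,b) \<in> Arr D \<times> Arr D. tp D a < hp D b \<and> hp D b < hp D a \<and> hp D a < tp D b}
  + card {(a,b) \<in> Arr D \<times> Arr D. hp D a < tp D b \<and> tp D b < tp D a \<and> tp D a < hp D b}"
  unfolding N_def F_def sum.distrib by (simp add: sum_if_card finite_Arr)

lemma sg_pm: "sg e * sg f = 1 \<or> sg e * sg f = -1"
  unfolding sg_def by auto

lemma card21:
  assumes wf: "wf_gauss D"
  shows "card {(i,j,k,l). i < j \<and> j < k \<and> k < l \<and> l < length D \<and>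
       aid (D!i) = aid (D!k) \<and> aid (D!j) = aid (D!l) \<and>
       is_tail (D!i) \<and> is_tail (D!l)}
    = card {(a,b) \<in> Arr D \<times> Arr D. tp D a < hp D b \<and> hp D b < hp D a \<and> hp D a < tp D b}"
    (is "card ?A = card ?P")
proof -
  let ?g = "\<lambda>(a,b). (tp D a, hp D b, hp D a, tp D b)"
  have inj: "inj_on ?g ?P"
  proof (rule inj_onI)
    fix x y assume xy: "x \<in> ?P" "y \<in> ?P" "?g x = ?g y"
    obtain a b where x: "x = (a,b)" by (cases x)
    obtain a' b' where y: "y = (a',b')" by (cases y)
    have m: "a \<in> Arr D" "b \<in> Arr D" "a' \<in> Arr D" "b' \<in> Arr D" using xy x y by auto
    have e: "tp D a = tp D a'" "tp D b = tp D b'" using xy(3) x y by auto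
    have "a = a'" using tp_props[OF wf m(1)] tp_props[OF wf m(3)] e(1) by metis
    moreover have "b = b'" using tp_props[OF wf m(2)] tp_props[OF wf m(4)] e(2) by metis
    ultimately show "x = y" using x y by simp
  qed
  have "?A = ?g ` ?P"
  proof
    show "?A \<subseteq> ?g ` ?P"
    proof
      fix q assume "q \<in> ?A"
      then obtain i j k l where q: "q = (i,j,k,l)" and c: "i < j" "j < k" "k < l" "l < length D"
        "aid (D!i) = aid (D!k)" "aid (D!j) = aid (D!l)" "is_tail (D!i)" "is_tail (D!l)" by (cases q) auto
      define a where "a = aid (D!i)"
      define b where "b = aid (D!j)"
      have aA: "a \<in> Arr D" "b \<in> Arr D" using c Arr_nth unfolding a_def b_def by auto
      have ti: "tp D a = i" using tp_eqI[OF wf, of i a] c unfolding a_def by auto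
      have tl: "tp D b = l" using tp_eqI[OF wf, of l b] c unfolding b_def by auto
      have "\<not> is_tail (D!k)" using tp_eqI[OF wf, of k a] c ti unfolding a_def by auto
      then have hk: "hp D a = k" using hp_eqI[OF wf, of k a] c unfolding a_def by auto
      have "\<not> is_tail (D!j)" using tp_eqI[OF wf, of j b] c tl unfolding b_def by auto
      then have hj: "hp D b = j" using hp_eqI[OF wf, of j b] c unfolding b_def by auto
      have "(a,b) \<in> ?P" using aA ti tl hk hj c by auto
      moreover have "q = ?g (a,b)" using q ti tl hk hj by simp
      ultimately show "q \<in> ?g ` ?P" by blast
    qed
  next
    show "?g ` ?P \<subseteq> ?A"
    proof
      fix q assume "q \<in> ?g ` ?P"
      then obtain a b where ab: "a \<in> Arr D" "b \<in> Arr D" "tp D a < hp D b" "hp D b < hp D a" "hp D a < tp D b"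
        and q: "q = ?g (a,b)" by blast
      show "q \<in> ?A" using ab q tp_props[OF wf ab(1)] tp_props[OF wf ab(2)] hp_props[OF wf ab(1)] hp_props[OF wf ab(2)]
        by auto
    qed
  qed
  then show ?thesis using card_image[OF inj] by simp
qed

lemma card22:
  assumes wf: "wf_gauss D"
  shows "card {(i,j,k,l). i < j \<and> j < k \<and> k < l \<and> l < length D \<and>
       aid (D!i) = aid (D!k) \<and> aid (D!j) = aid (D!l) \<and>
       is_tail (D!k) \<and> is_tail (D!j)}
    = card {(a,b) \<in> Arr D \<times> Arr D. hp D a < tp D b \<and> tp D b < tp D a \<and> tp D a < hp D b}"
    (is "card ?A = card ?P")
proof -
  let ?g = "\<lambda>(a,b). (hp D a, tp D b, tp D a, hp D b)"
  have inj: "inj_on ?g ?P"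
  proof (rule inj_onI)
    fix x y assume xy: "x \<in> ?P" "y \<in> ?P" "?g x = ?g y"
    obtain a b where x: "x = (a,b)" by (cases x)
    obtain a' b' where y: "y = (a',b')" by (cases y)
    have m: "a \<in> Arr D" "b \<in> Arr D" "a' \<in> Arr D" "b' \<in> Arr D" using xy x y by auto
    have e: "tp D a = tp D a'" "tp D b = tp D b'" using xy(3) x y by auto
    have "a = a'" using tp_props[OF wf m(1)] tp_props[OF wf m(3)] e(1) by metis
    moreover have "b = b'" using tp_props[OF wf m(2)] tp_props[OF wf m(4)] e(2) by metis
    ultimately show "x = y" using x y by simp
  qed
  have "?A = ?g ` ?P"
  proof
    show "?A \<subseteq> ?g ` ?P"
    proof
      fix q assume "q \<in> ?A"
      then obtain i j k l where q: "q = (i,j,k,l)" and c: "i < j" "j < k" "k < l" "l < length D"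
        "aid (D!i) = aid (D!k)" "aid (D!j) = aid (D!l)" "is_tail (D!k)" "is_tail (D!j)" by (cases q) auto
      define a where "a = aid (D!i)"
      define b where "b = aid (D!j)"
      have aA: "a \<in> Arr D" "b \<in> Arr D" using c Arr_nth unfolding a_def b_def by auto
      have tk: "tp D a = k" using tp_eqI[OF wf, of k a] c unfolding a_def by auto
      have tj: "tp D b = j" using tp_eqI[OF wf, of j b] c unfolding b_def by auto
      have "\<not> is_tail (D!i)" using tp_eqI[OF wf, of i a] c tk unfolding a_def by auto
      then have hi: "hp D a = i" using hp_eqI[OF wf, of i a] c unfolding a_def by auto
      have "\<not> is_tail (D!l)" using tp_eqI[OF wf, of l b] c tj unfolding b_def by auto
      then have hl: "hp D b = l" using hp_eqI[OF wf, of l b] c unfolding b_def by auto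
      have "(a,b) \<in> ?P" using aA tk tj hi hl c by auto
      moreover have "q = ?g (a,b)" using q tk tj hi hl by simp
      ultimately show "q \<in> ?g ` ?P" by blast
    qed
  next
    show "?g ` ?P \<subseteq> ?A"
    proof
      fix q assume "q \<in> ?g ` ?P"
      then obtain a b where ab: "a \<in> Arr D" "b \<in> Arr D" "hp D a < tp D b" "tp D b < tp D a" "tp D a < hp D b"
        and q: "q = ?g (a,b)" by blast
      show "q \<in> ?A" using ab q tp_props[OF wf ab(1)] tp_props[OF wf ab(2)] hp_props[OF wf ab(1)] hp_props[OF wf ab(2)]
        by auto
    qed
  qed
  then show ?thesis using card_image[OF inj] by simp
qed

lemma fin_box: "finite ({..<n::nat} \<times> {..<n} \<times> {..<n} \<times> {..<n})" by simp

lemma link: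
  assumes wf: "wf_gauss D"
  shows "(v21 D + v22 D) mod 2 = int (N D) mod 2"
proof -
  let ?X = "card {(i,j,k,l). i < j \<and> j < k \<and> k < l \<and> l < length D \<and>
       aid (D!i) = aid (D!k) \<and> aid (D!j) = aid (D!l) \<and>
       is_tail (D!i) \<and> is_tail (D!l)}"
  let ?Y = "card {(i,j,k,l). i < j \<and> j < k \<and> k < l \<and> l < length D \<and>
       aid (D!i) = aid (D!k) \<and> aid (D!j) = aid (D!l) \<and>
       is_tail (D!k) \<and> is_tail (D!j)}"
  have 1: "v21 D mod 2 = int ?X mod 2"
    unfolding v21_def by (rule sum_pm1_mod2, rule finite_subset[OF _ fin_box[of "length D"]]) (auto simp: sg_pm)
  have 2: "v22 D mod 2 = int ?Y mod 2"
    unfolding v22_def by (rule sum_pm1_mod2, rule finite_subset[OF _ fin_box[of "length D"]]) (auto simp: sg_pm)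
  have "N D = ?X + ?Y" unfolding N_card card21[OF wf] card22[OF wf] ..
  then have 3: "int (N D) = int ?X + int ?Y" by simp
  have "(v21 D + v22 D) mod 2 = (v21 D mod 2 + v22 D mod 2) mod 2" by (rule mod_add_eq[symmetric])
  also have "\<dots> = (int ?X mod 2 + int ?Y mod 2) mod 2" using 1 2 by simp
  also have "\<dots> = (int ?X + int ?Y) mod 2" by (rule mod_add_eq)
  also have "\<dots> = int (N D) mod 2" using 3 by simp
  finally show ?thesis .
qed

definition Fv :: "nat \<Rightarrow> nat \<Rightarrow> nat \<Rightarrow> nat \<Rightarrow> nat" where
  "Fv ta ha tb hb = (if ta < hb \<and> hb < ha \<and> ha < tb then 1 else 0) +
               (if ha < tb \<and> tb < ta \<and> ta < hb then 1 else 0)"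

lemma F_Fv: "F t h a b = Fv (t a) (h a) (t b) (h b)"
  unfolding F_def Fv_def ..

lemma F_diag: "F t h a a = 0" unfolding F_def by auto

lemma Fv_mono: "strict_mono g \<Longrightarrow> Fv (g ta) (g ha) (g tb) (g hb) = Fv ta ha tb hb"
  unfolding Fv_def by (simp add: strict_mono_less)

lemma sum_split2:
  assumes "finite A" "B \<subseteq> A"
  shows "(\<Sum>a\<in>A. \<Sum>b\<in>A. f a b) = (\<Sum>a\<in>A-B. \<Sum>b\<in>A-B. f a b)
     + (\<Sum>x\<in>A-B. \<Sum>p\<in>B. f p x + f x p) + (\<Sum>p\<in>B. \<Sum>q\<in>B. f p q)"
proof -
  have fB: "finite B" using assms finite_subset by blast
  have split: "\<And>g. (\<Sum>a\<in>A. g a) = (\<Sum>a\<in>A-B. g a) + (\<Sum>a\<in>B. g a)"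
    using assms by (metis add.commute sum.subset_diff)
  have "(\<Sum>a\<in>A. \<Sum>b\<in>A. f a b) = (\<Sum>a\<in>A. (\<Sum>b\<in>A-B. f a b) + (\<Sum>b\<in>B. f a b))"
    by (rule sum.cong[OF refl], rule split)
  also have "\<dots> = (\<Sum>a\<in>A-B. (\<Sum>b\<in>A-B. f a b) + (\<Sum>b\<in>B. f a b)) + (\<Sum>a\<in>B. (\<Sum>b\<in>A-B. f a b) + (\<Sum>b\<in>B. f a b))"
    by (rule split)
  also have "\<dots> = (\<Sum>a\<in>A-B. \<Sum>b\<in>A-B. f a b) + (\<Sum>a\<in>A-B. \<Sum>b\<in>B. f a b) + (\<Sum>a\<in>B. \<Sum>b\<in>A-B. f a b) + (\<Sum>a\<in>B. \<Sum>b\<in>B. f a b)"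
    by (simp add: sum.distrib add.assoc)
  finally have E: "(\<Sum>a\<in>A. \<Sum>b\<in>A. f a b) = (\<Sum>a\<in>A-B. \<Sum>b\<in>A-B. f a b) + (\<Sum>a\<in>A-B. \<Sum>b\<in>B. f a b) + (\<Sum>a\<in>B. \<Sum>b\<in>A-B. f a b) + (\<Sum>a\<in>B. \<Sum>b\<in>B. f a b)" .
  have X: "(\<Sum>a\<in>B. \<Sum>b\<in>A-B. f a b) = (\<Sum>b\<in>A-B. \<Sum>a\<in>B. f a b)" by (rule sum.swap)
  have Y: "(\<Sum>a\<in>A-B. \<Sum>b\<in>B. f a b) + (\<Sum>b\<in>A-B. \<Sum>a\<in>B. f a b) = (\<Sum>x\<in>A-B. \<Sum>p\<in>B. f p x + f x p)"
    by (simp add: sum.distrib add.commute)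
  show ?thesis unfolding E X Y[symmetric] by (simp add: add.assoc)
qed

lemma filter_mono_ex:
  "\<exists>g. strict_mono g \<and> (\<forall>k<length (filter P D). g k < length D \<and> filter P D ! k = D ! g k)"
proof (induction D)
  case Nil
  show ?case by (rule exI[of _ id]) (simp add: strict_mono_def)
next
  case (Cons x D)
  then obtain g where g: "strict_mono g" "\<forall>k<length (filter P D). g k < length D \<and> filter P D ! k = D ! g k" by blast
  show ?case
  proof (cases "P x")
    case True
    let ?h = "\<lambda>k. if k = 0 then 0 else Suc (g (k - 1))"
    have "strict_mono ?h" unfolding strict_mono_Suc_iff using g(1) by (simp add: strict_mono_def)
    moreover have "\<forall>k<length (filter P (x#D)). ?h k < length (x#D) \<and> filter P (x#D) ! k = (x#D) ! ?h k"
    proof (intro allI impI)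
      fix k assume "k < length (filter P (x#D))"
      then show "?h k < length (x#D) \<and> filter P (x#D) ! k = (x#D) ! ?h k"
        using True g(2) by (cases k) auto
    qed
    ultimately show ?thesis by blast
  next
    case False
    have "strict_mono (Suc \<circ> g)" using g(1) by (simp add: strict_mono_def)
    moreover have "\<forall>k<length (filter P (x#D)). (Suc \<circ> g) k < length (x#D) \<and> filter P (x#D) ! k = (x#D) ! (Suc \<circ> g) k"
      using False g(2) by auto
    ultimately show ?thesis by blast
  qed
qed

lemma wf_filter_aid:
  assumes "wf_gauss D" shows "wf_gauss (filter (\<lambda>e. aid e \<notin> M) D)"
  using assms unfolding wf_gauss_def by auto

lemma Arr_filter: "Arr (filter (\<lambda>e. aid e \<notin> M) D) = Arr D - M"
  unfolding Arr_def by auto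

lemma del_N:
  assumes wf: "wf_gauss D" and D': "D' = filter (\<lambda>e. aid e \<notin> M) D"
  shows "N D = N D' + (\<Sum>x\<in>Arr D - M. \<Sum>p\<in>Arr D \<inter> M. F (tp D) (hp D) p x + F (tp D) (hp D) x p)
     + (\<Sum>p\<in>Arr D \<inter> M. \<Sum>q\<in>Arr D \<inter> M. F (tp D) (hp D) p q)"
proof -
  have wf': "wf_gauss D'" using wf_filter_aid[OF wf] D' by simp
  have A': "Arr D' = Arr D - M" using Arr_filter D' by simp
  obtain g where g: "strict_mono g" "\<forall>k<length D'. g k < length D \<and> D' ! k = D ! g k"
    using filter_mono_ex[of "\<lambda>e. aid e \<notin> M" D] D' by blast
  have tpg: "tp D a = g (tp D' a)" "hp D a = g (hp D' a)" if a: "a \<in> Arr D'" for a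
  proof -
    show "tp D a = g (tp D' a)" using tp_props[OF wf' a] g(2) by (intro tp_eqI[OF wf]) auto
    show "hp D a = g (hp D' a)" using hp_props[OF wf' a] g(2) by (intro hp_eqI[OF wf]) auto
  qed
  have "(\<Sum>a\<in>Arr D - (Arr D \<inter> M). \<Sum>b\<in>Arr D - (Arr D \<inter> M). F (tp D) (hp D) a b) = N D'"
    unfolding N_def A'[symmetric]
  proof -
    have e: "Arr D - (Arr D \<inter> M) = Arr D'" using A' by auto
    show "(\<Sum>a\<in>Arr D - (Arr D \<inter> M). \<Sum>b\<in>Arr D - (Arr D \<inter> M). F (tp D) (hp D) a b) =
      (\<Sum>a\<in>Arr D'. \<Sum>b\<in>Arr D'. F (tp D') (hp D') a b)"
      unfolding e by (intro sum.cong refl) (simp add: F_Fv tpg Fv_mono[OF g(1)])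
  qed
  moreover have "Arr D - (Arr D \<inter> M) = Arr D - M" by auto
  ultimately show ?thesis
    using sum_split2[OF finite_Arr, of "Arr D \<inter> M" D "F (tp D) (hp D)"] unfolding N_def by simp
qed

lemma interl_set: "length xs = Suc (length segs) \<Longrightarrow>
  set (interl xs segs) = (\<Union>x\<in>set xs. set x) \<union> (\<Union>s\<in>set segs. set s)"
proof (induction segs arbitrary: xs)
  case Nil then show ?case by (cases xs) auto
next
  case (Cons s ss) then show ?case by (cases xs) auto
qed

lemma interl_map: "length xs = Suc (length segs) \<Longrightarrow>
  map f (interl xs segs) = interl (map (map f) xs) (map (map f) segs)"
proof (induction segs arbitrary: xs)
  case Nil then show ?case by (cases xs) auto
next
  case (Cons s ss) then show ?case by (cases xs) auto
qed

lemma interl_filter: "length xs = Suc (length segs) \<Longrightarrow>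
  filter P (interl xs segs) = interl (map (filter P) xs) (map (filter P) segs)"
proof (induction segs arbitrary: xs)
  case Nil then show ?case by (cases xs) auto
next
  case (Cons s ss) then show ?case by (cases xs) auto
qed

lemma interl_split: "length xs = Suc (length segs) \<Longrightarrow> s \<in> set segs \<Longrightarrow>
  \<exists>P S. interl xs segs = P @ s @ S"
proof (induction segs arbitrary: xs)
  case Nil then show ?case by simp
next
  case (Cons s' ss)
  then obtain x xs' where xs: "xs = x # xs'" by (cases xs) auto
  show ?case
  proof (cases "s = s'")
    case True then show ?thesis using xs by auto
  next
    case False
    then have ss: "s \<in> set ss" using Cons by simp
    have l: "length xs' = Suc (length ss)" using Cons.prems xs by simp
    obtain P S where "interl xs' ss = P @ s @ S" using Cons.IH[OF l ss] by blast
    then show ?thesis using xs by (rule_tac x="x @ s' @ P" in exI) auto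
  qed
qed

lemma interl_disj: "length xs = Suc (length segs) \<Longrightarrow> distinct (interl xs segs) \<Longrightarrow>
  x \<in> set xs \<Longrightarrow> s \<in> set segs \<Longrightarrow> set x \<inter> set s = {}"
proof (induction segs arbitrary: xs)
  case Nil then show ?case by simp
next
  case (Cons s' ss)
  then obtain x0 xs' where xs: "xs = x0 # xs'" by (cases xs) auto
  have l: "length xs' = Suc (length ss)" using Cons xs by simp
  have d: "distinct (x0 @ s' @ interl xs' ss)" using Cons xs by simp
  have st: "set (interl xs' ss) = (\<Union>x\<in>set xs'. set x) \<union> (\<Union>s\<in>set ss. set s)" using interl_set[OF l] .
  have d2: "distinct (interl xs' ss)" using d by simp
  have IH: "x \<in> set xs' \<Longrightarrow> s \<in> set ss \<Longrightarrow> set x \<inter> set s = {}"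
    using Cons.IH[OF l d2] by blast
  have "set x0 \<inter> set s' = {}" "set x0 \<inter> set (interl xs' ss) = {}" "set s' \<inter> set (interl xs' ss) = {}"
    using d by auto
  then show ?case using Cons.prems(3,4) xs st IH by fastforce
qed

lemma pos_tail: "wf_gauss D \<Longrightarrow> D = P @ e # S \<Longrightarrow> is_tail e \<Longrightarrow> tp D (aid e) = length P"
  by (rule tp_eqI) auto

lemma pos_head: "wf_gauss D \<Longrightarrow> D = P @ e # S \<Longrightarrow> \<not> is_tail e \<Longrightarrow> hp D (aid e) = length P"
  by (rule hp_eqI) auto

lemma gap_aid:
  assumes wf: "wf_gauss D" and D: "D = interl xs segs" and l: "length xs = Suc (length segs)"
    and x: "x \<in> set xs" "e \<in> set x"
    and segp: "\<And>t. \<exists>s\<in>set segs. Ep p t sp \<in> set s"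
  shows "aid e \<noteq> p"
proof
  assume ae: "aid e = p"
  obtain t s' where e: "e = Ep p t s'" using ae by (cases e) auto
  obtain s where s: "s \<in> set segs" "Ep p t sp \<in> set s" using segp by blast
  have inD: "e \<in> set D" "Ep p t sp \<in> set D" using interl_set[OF l] D x s by auto
  show False
  proof (cases "s' = sp")
    case True
    then have "e \<in> set x \<inter> set s" using x s e by simp
    then show False using interl_disj[OF l _ x(1) s(1)] wf D unfolding wf_gauss_def by auto
  next
    case False
    then have "sp = (\<not> s')" by auto
    then show False using inD e wf unfolding wf_gauss_def by auto
  qed
qed

lemma pos_ne:
  assumes wf: "wf_gauss D" and a: "a \<in> Arr D" and b: "b \<in> Arr D" and ab: "a \<noteq> b"
  shows "tp D a \<noteq> tp D b" "tp D a \<noteq> hp D b" "hp D a \<noteq> hp D b" "hp D a \<noteq> tp D b"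
  using tp_props[OF wf a] tp_props[OF wf b] hp_props[OF wf a] hp_props[OF wf b] ab by metis+

lemma pos_ne2: "wf_gauss D \<Longrightarrow> a \<in> Arr D \<Longrightarrow> tp D a \<noteq> hp D a"
  using tp_props hp_props by metis

lemma Fv_adj0: "(ha = Suc ta \<or> ta = Suc ha) \<Longrightarrow> tx \<noteq> ta \<Longrightarrow> tx \<noteq> ha \<Longrightarrow> hx \<noteq> ta \<Longrightarrow> hx \<noteq> ha \<Longrightarrow>
  Fv ta ha tx hx = 0 \<and> Fv tx hx ta ha = 0"
  unfolding Fv_def by auto

lemma adj_cmp: "(b = Suc a \<or> a = Suc b) \<Longrightarrow> z \<noteq> a \<Longrightarrow> z \<noteq> b \<Longrightarrow> (a < z \<longleftrightarrow> b < z) \<and> (z < a \<longleftrightarrow> z < b)"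
  by auto
lemma Fv_adj_eq: assumes "(tj = Suc ti \<or> ti = Suc tj)" "(hj = Suc hi \<or> hi = Suc hj)"
  "tx \<notin> {ti,tj,hi,hj}" "hx \<notin> {ti,tj,hi,hj}"
  shows "Fv ti hi tx hx = Fv tj hj tx hx \<and> Fv tx hx ti hi = Fv tx hx tj hj"
proof -
  have c1: "(ti < hx) = (tj < hx)" "(hx < ti) = (hx < tj)" "(ti < tx) = (tj < tx)" "(tx < ti) = (tx < tj)"
    using adj_cmp[OF assms(1)] assms(3,4) by auto
  have c2: "(hi < hx) = (hj < hx)" "(hx < hi) = (hx < hj)" "(hi < tx) = (hj < tx)" "(tx < hi) = (tx < hj)"
    using adj_cmp[OF assms(2)] assms(3,4) by auto
  show ?thesis unfolding Fv_def c1 c2 by simp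
qed
lemma Fv_adj_pair: "(tj = Suc ti \<or> ti = Suc tj) \<Longrightarrow> (hj = Suc hi \<or> hi = Suc hj) \<Longrightarrow>
  distinct [ti,tj,hi,hj] \<Longrightarrow> Fv ti hi tj hj = 0 \<and> Fv tj hj ti hi = 0"
  unfolding Fv_def by (elim disjE) auto

lemma R1_N:
  assumes wf: "wf_gauss D" and r: "R1 D D'"
  shows "N D = N D'"
proof -
  obtain i t s xs where l: "length xs = Suc (length [[Ep i t s, Ep i (\<not> t) s]])" and D: "D = interl xs [[Ep i t s, Ep i (\<not> t) s]]"
    and D': "D' = interl xs [[]]"
    using r unfolding R1_def local_repl_def by blast
  obtain x0 x1 where xs: "xs = [x0, x1]" using l by (cases xs; cases "tl xs") auto
  have D2: "D = x0 @ [Ep i t s, Ep i (\<not> t) s] @ x1" using D xs by simp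
  have gap: "aid e \<noteq> i" if "x \<in> set xs" "e \<in> set x" for x e
    by (rule gap_aid[OF wf D l that, where sp=s]) auto
  have D'f: "D' = filter (\<lambda>e. aid e \<notin> {i}) D"
  proof -
    have "filter (\<lambda>e. aid e \<notin> {i}) x0 = x0" "filter (\<lambda>e. aid e \<notin> {i}) x1 = x1"
      using gap xs by (auto intro: filter_True)
    then show ?thesis using D' D2 xs by simp
  qed
  have iA: "i \<in> Arr D" using D2 unfolding Arr_def by force
  let ?t = "tp D" and ?h = "hp D"
  have adj: "?h i = Suc (?t i) \<or> ?t i = Suc (?h i)"
  proof (cases t)
    case True
    have "?t i = length x0" using pos_tail[OF wf, of x0 "Ep i t s"] D2 True by simp
    moreover have "?h i = Suc (length x0)" using pos_head[OF wf, of "x0 @ [Ep i t s]" "Ep i (\<not> t) s"] D2 True by simp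
    ultimately show ?thesis by simp
  next
    case False
    have "?h i = length x0" using pos_head[OF wf, of x0 "Ep i t s"] D2 False by simp
    moreover have "?t i = Suc (length x0)" using pos_tail[OF wf, of "x0 @ [Ep i t s]" "Ep i (\<not> t) s"] D2 False by simp
    ultimately show ?thesis by simp
  qed
  have z: "F ?t ?h i x + F ?t ?h x i = 0" if "x \<in> Arr D - {i}" for x
  proof -
    have "x \<in> Arr D" "x \<noteq> i" using that by auto
    then show ?thesis unfolding F_Fv using Fv_adj0[OF adj] pos_ne[OF wf iA, of x] by (metis add_0)
  qed
  have "Arr D \<inter> {i} = {i}" using iA by auto
  then show ?thesis using del_N[OF wf D'f] z F_diag by simp
qed

lemma R2_N:
  assumes wf: "wf_gauss D" and r: "R2 D D'"
  shows "N D mod 2 = N D' mod 2"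
proof -
  obtain i j s ori segs xs where ij: "i \<noteq> j"
    and ms: "mset segs = {# [Ep i True s, Ep j True (\<not> s)],
                    (if ori then [Ep i False s, Ep j False (\<not> s)]
                            else [Ep j False (\<not> s), Ep i False s]) #}"
    and l: "length xs = Suc (length segs)" and D: "D = interl xs segs"
    and D': "D' = interl xs [[],[]]"
    using r unfolding R2_def local_repl_def by auto
  let ?A = "[Ep i True s, Ep j True (\<not> s)]"
  let ?B = "(if ori then [Ep i False s, Ep j False (\<not> s)] else [Ep j False (\<not> s), Ep i False s])"
  have ss: "set segs = {?A, ?B}" using arg_cong[OF ms, of set_mset] by simp
  have ls: "length segs = 2" using arg_cong[OF ms, of size] by simp
  have gapi: "aid e \<noteq> i" if "x \<in> set xs" "e \<in> set x" for x e
    by (rule gap_aid[OF wf D l that, where sp=s]) (auto simp: ss)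
  have gapj: "aid e \<noteq> j" if "x \<in> set xs" "e \<in> set x" for x e
    by (rule gap_aid[OF wf D l that, where sp="\<not> s"]) (auto simp: ss)
  let ?Q = "\<lambda>e. aid e \<notin> {i,j}"
  have "filter ?Q D = interl (map (filter ?Q) xs) (map (filter ?Q) segs)"
    using interl_filter[OF l] D by simp
  also have "map (filter ?Q) xs = xs"
    by (rule map_idI, rule filter_True) (use gapi gapj in blast)
  also have "map (filter ?Q) segs = [[],[]]"
  proof -
    have "map (filter ?Q) segs = map (\<lambda>_. []) segs"
      by (rule map_cong[OF refl]) (auto simp: ss)
    then show ?thesis using ls by (cases segs; cases "tl segs") auto
  qed
  finally have D'f: "D' = filter ?Q D" using D' by simp
  have iA: "i \<in> Arr D" and jA: "j \<in> Arr D"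
    using interl_set[OF l] D ss unfolding Arr_def by force+
  let ?t = "tp D" and ?h = "hp D"
  obtain P1 S1 where d1: "D = P1 @ ?A @ S1" using interl_split[OF l, of ?A] D ss by auto
  obtain P2 S2 where d2: "D = P2 @ ?B @ S2" using interl_split[OF l, of ?B] D ss by auto
  have ti: "?t i = length P1" using pos_tail[OF wf, of P1 "Ep i True s"] d1 by simp
  have tj: "?t j = Suc (length P1)" using pos_tail[OF wf, of "P1 @ [Ep i True s]" "Ep j True (\<not> s)"] d1 by simp
  have hadj: "?h j = Suc (?h i) \<or> ?h i = Suc (?h j)"
  proof (cases ori)
    case True
    have "?h i = length P2" using pos_head[OF wf, of P2 "Ep i False s"] d2 True by simp
    moreover have "?h j = Suc (length P2)" using pos_head[OF wf, of "P2 @ [Ep i False s]" "Ep j False (\<not> s)"] d2 True by simp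
    ultimately show ?thesis by simp
  next
    case False
    have "?h j = length P2" using pos_head[OF wf, of P2 "Ep j False (\<not> s)"] d2 False by simp
    moreover have "?h i = Suc (length P2)" using pos_head[OF wf, of "P2 @ [Ep j False (\<not> s)]" "Ep i False s"] d2 False by simp
    ultimately show ?thesis by simp
  qed
  have tadj: "?t j = Suc (?t i) \<or> ?t i = Suc (?t j)" using ti tj by simp
  have xeq: "F ?t ?h i x + F ?t ?h x i = F ?t ?h j x + F ?t ?h x j" if "x \<in> Arr D - {i,j}" for x
  proof -
    have x: "x \<in> Arr D" "x \<noteq> i" "x \<noteq> j" using that by auto
    have "?t x \<notin> {?t i, ?t j, ?h i, ?h j}" "?h x \<notin> {?t i, ?t j, ?h i, ?h j}"
      using pos_ne[OF wf x(1) iA x(2)] pos_ne[OF wf x(1) jA x(3)] by auto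
    then show ?thesis unfolding F_Fv using Fv_adj_eq[OF tadj hadj] by simp
  qed
  have pair: "F ?t ?h i j = 0" "F ?t ?h j i = 0"
  proof -
    have "distinct [?t i, ?t j, ?h i, ?h j]"
      using pos_ne[OF wf iA jA ij] pos_ne2[OF wf iA] pos_ne2[OF wf jA] by auto
    then show "F ?t ?h i j = 0" "F ?t ?h j i = 0" unfolding F_Fv using Fv_adj_pair[OF tadj hadj] by auto
  qed
  have ijA: "Arr D \<inter> {i,j} = {i,j}" using iA jA by auto
  have E1: "(\<Sum>x\<in>Arr D - {i,j}. \<Sum>p\<in>{i,j}. F ?t ?h p x + F ?t ?h x p) = 2 * (\<Sum>x\<in>Arr D - {i,j}. F ?t ?h i x + F ?t ?h x i)"
    unfolding sum_distrib_left using ij xeq by (intro sum.cong refl) auto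
  have E2: "(\<Sum>p\<in>{i,j}. \<Sum>q\<in>{i,j}. F ?t ?h p q) = 0" using ij pair F_diag by simp
  have "N D = N D' + 2 * (\<Sum>x\<in>Arr D - {i,j}. F ?t ?h i x + F ?t ?h x i)"
    using del_N[OF wf D'f] unfolding ijA E1 E2 by simp
  then show ?thesis by simp
qed

definition sw :: "nat \<Rightarrow> nat \<Rightarrow> nat" where "sw q k = (if k = q then Suc q else if k = Suc q then q else k)"

lemma c1: "a \<noteq> b \<Longrightarrow> a < q \<or> Suc q < a \<Longrightarrow> b < q \<or> Suc q < b \<Longrightarrow> (Fv (Suc q) a q b + Fv q b (Suc q) a + Fv q a (Suc q) b + Fv (Suc q) b q a) mod 2 = (if (q < a) = (Suc q < b) then 0 else 1)"
  unfolding Fv_def by (elim disjE) auto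
lemma c2: "a \<noteq> b \<Longrightarrow> a < q \<or> Suc q < a \<Longrightarrow> b < q \<or> Suc q < b \<Longrightarrow> (Fv (Suc q) a b q + Fv b q (Suc q) a + Fv q a b (Suc q) + Fv b (Suc q) q a) mod 2 = (if (q < a) = (b < Suc q) then 0 else 1)"
  unfolding Fv_def by (elim disjE) auto
lemma c3: "a \<noteq> b \<Longrightarrow> a < q \<or> Suc q < a \<Longrightarrow> b < q \<or> Suc q < b \<Longrightarrow> (Fv a (Suc q) q b + Fv q b a (Suc q) + Fv a q (Suc q) b + Fv (Suc q) b a q) mod 2 = (if (a < q) = (Suc q < b) then 0 else 1)"
  unfolding Fv_def by (elim disjE) auto
lemma c4: "a \<noteq> b \<Longrightarrow> a < q \<or> Suc q < a \<Longrightarrow> b < q \<or> Suc q < b \<Longrightarrow> (Fv a (Suc q) b q + Fv b q a (Suc q) + Fv a q b (Suc q) + Fv b (Suc q) a q) mod 2 = (if (a < q) = (b < Suc q) then 0 else 1)"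
  unfolding Fv_def by (elim disjE) auto

lemma swap_arith:
  assumes "tU = q \<or> hU = q" "tV = Suc q \<or> hV = Suc q" "distinct [tU, hU, tV, hV]"
  shows "(Fv (sw q tU) (sw q hU) (sw q tV) (sw q hV) + Fv (sw q tV) (sw q hV) (sw q tU) (sw q hU)
     + Fv tU hU tV hV + Fv tV hV tU hU) mod 2 = (if (tU < hU) = (tV < hV) then 0 else 1)"
proof -
  consider "tU = q" "tV = Suc q" | "tU = q" "hV = Suc q" | "hU = q" "tV = Suc q" | "hU = q" "hV = Suc q"
    using assms(1,2) by blast
  then show ?thesis
  proof cases
    case 1
    then have o: "hU < q \<or> Suc q < hU" "hV < q \<or> Suc q < hV" using assms(3) by auto
    have s: "sw q tU = Suc q" "sw q tV = q" "sw q hU = hU" "sw q hV = hV" using 1 assms(3) unfolding sw_def by auto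
    show ?thesis unfolding s using c1[OF _ o] 1 assms(3) by simp
  next
    case 2
    then have o: "hU < q \<or> Suc q < hU" "tV < q \<or> Suc q < tV" using assms(3) by auto
    have s: "sw q tU = Suc q" "sw q hV = q" "sw q hU = hU" "sw q tV = tV" using 2 assms(3) unfolding sw_def by auto
    show ?thesis unfolding s using c2[OF _ o] 2 assms(3) by simp
  next
    case 3
    then have o: "tU < q \<or> Suc q < tU" "hV < q \<or> Suc q < hV" using assms(3) by auto
    have s: "sw q hU = Suc q" "sw q tV = q" "sw q tU = tU" "sw q hV = hV" using 3 assms(3) unfolding sw_def by auto
    show ?thesis unfolding s using c3[OF _ o] 3 assms(3) by simp
  next
    case 4
    then have o: "tU < q \<or> Suc q < tU" "tV < q \<or> Suc q < tV" using assms(3) by auto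
    have s: "sw q hU = Suc q" "sw q hV = q" "sw q tU = tU" "sw q tV = tV" using 4 assms(3) unfolding sw_def by auto
    show ?thesis unfolding s using c4[OF _ o] 4 assms(3) by simp
  qed
qed

lemma nth_sw: "(P @ v # u # S) ! k = (P @ u # v # S) ! sw (length P) k"
proof -
  have "k < length P \<or> k = length P \<or> k = Suc (length P) \<or> Suc (length P) < k" by arith
  then show ?thesis by (elim disjE) (simp_all add: nth_append nth_Cons' sw_def)
qed

lemma sw_sw: "sw q (sw q k) = k" unfolding sw_def by auto

lemma sw_cmp: "z \<noteq> q \<Longrightarrow> z \<noteq> Suc q \<Longrightarrow> (sw q y < z \<longleftrightarrow> y < z) \<and> (z < sw q y \<longleftrightarrow> z < y)"
  unfolding sw_def by auto

lemma sw_id: "z \<noteq> q \<Longrightarrow> z \<noteq> Suc q \<Longrightarrow> sw q z = z" unfolding sw_def by auto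

lemma Fv_sw_cmp:
  assumes "tx \<noteq> q" "tx \<noteq> Suc q" "hx \<noteq> q" "hx \<noteq> Suc q"
  shows "Fv (sw q ta) (sw q ha) tx hx = Fv ta ha tx hx" "Fv tx hx (sw q ta) (sw q ha) = Fv tx hx ta ha"
  unfolding Fv_def using sw_cmp[OF assms(1,2)] sw_cmp[OF assms(3,4)] by simp_all

lemma mod_comb: assumes "((b'::nat) + b) mod 2 = d" shows "(r + b') mod 2 = (r + b + d) mod 2"
proof -
  have "(r + b + d) mod 2 = (r + b + (b' + b)) mod 2" using assms by (metis mod_add_right_eq)
  also have "r + b + (b' + b) = (r + b') + 2 * b" by simp
  also have "((r + b') + 2 * b) mod 2 = (r + b') mod 2" by simp
  finally show ?thesis by simp
qed

definition dir :: "gauss \<Rightarrow> nat \<Rightarrow> bool" where "dir D a = (tp D a < hp D a)"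

lemma swap_N:
  assumes wf: "wf_gauss D" and D: "D = P @ u # v # S" and uv: "aid u \<noteq> aid v"
    and D': "D' = P @ v # u # S"
  shows "wf_gauss D'" "Arr D' = Arr D" "\<forall>a\<in>Arr D. dir D' a = dir D a"
    "N D' mod 2 = (N D + (if dir D (aid u) = dir D (aid v) then 0 else 1)) mod 2"
proof -
  define q where "q = length P"
  have len: "length D' = length D" "Suc q < length D" unfolding D D' q_def by simp_all
  have nth: "D' ! k = D ! sw q k" if "k < length D" for k
    unfolding D D' q_def by (rule nth_sw)
  have setD: "set D' = set D" unfolding D D' by auto
  have distD: "distinct D' = distinct D" unfolding D D' by (rule mset_eq_imp_distinct_iff) simp
  show wf': "wf_gauss D'" using wf setD distD unfolding wf_gauss_def by simp
  show AD: "Arr D' = Arr D" using setD unfolding Arr_def by simp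
  have swl: "sw q k < length D" if "k < length D" for k using that len unfolding sw_def by auto
  have tp': "tp D' a = sw q (tp D a)" "hp D' a = sw q (hp D a)" if a: "a \<in> Arr D" for a
  proof -
    show "tp D' a = sw q (tp D a)"
      using tp_props[OF wf a] by (intro tp_eqI[OF wf']) (auto simp: len nth swl sw_sw)
    show "hp D' a = sw q (hp D a)"
      using hp_props[OF wf a] by (intro hp_eqI[OF wf']) (auto simp: len nth swl sw_sw)
  qed
  define U where "U = aid u"
  define V where "V = aid v"
  have Dq: "D ! q = u" "D ! Suc q = v" unfolding D q_def by (auto simp: nth_append)
  have UA: "U \<in> Arr D" "V \<in> Arr D" using Dq len Arr_nth unfolding U_def V_def by (metis Suc_lessD)+
  have UV: "U \<noteq> V" using uv U_def V_def by simp
  have posU: "tp D U = q \<or> hp D U = q"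
    using Dq len tp_eqI[OF wf, of q U] hp_eqI[OF wf, of q U] unfolding U_def by (cases "is_tail u") auto
  have posV: "tp D V = Suc q \<or> hp D V = Suc q"
    using Dq len tp_eqI[OF wf, of "Suc q" V] hp_eqI[OF wf, of "Suc q" V] unfolding V_def by (cases "is_tail v") auto
  have other: "tp D x \<noteq> q" "tp D x \<noteq> Suc q" "hp D x \<noteq> q" "hp D x \<noteq> Suc q"
    if "x \<in> Arr D" "x \<noteq> U" "x \<noteq> V" for x
    using tp_props[OF wf that(1)] hp_props[OF wf that(1)] Dq that(2,3) unfolding U_def V_def by auto
  have oneout: "(tp D a \<noteq> q \<and> tp D a \<noteq> Suc q) \<or> (hp D a \<noteq> q \<and> hp D a \<noteq> Suc q)" if a: "a \<in> Arr D" for a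
  proof (rule ccontr)
    assume c: "\<not> ?thesis"
    have ne: "tp D a \<noteq> hp D a" using pos_ne2[OF wf a] .
    have "aid (D ! tp D a) = a" "aid (D ! hp D a) = a" using tp_props[OF wf a] hp_props[OF wf a] by auto
    then have "aid (D!q) = a" "aid (D ! Suc q) = a" using c ne by auto
    then show False using Dq uv by simp
  qed
  show "\<forall>a\<in>Arr D. dir D' a = dir D a"
  proof
    fix a assume a: "a \<in> Arr D"
    show "dir D' a = dir D a" unfolding dir_def tp'(1)[OF a] tp'(2)[OF a]
      using oneout[OF a] sw_cmp[of "tp D a" q] sw_cmp[of "hp D a" q] sw_id[of "tp D a" q] sw_id[of "hp D a" q] by auto
  qed
  let ?t = "tp D" and ?h = "hp D" and ?t' = "\<lambda>a. sw q (tp D a)" and ?h' = "\<lambda>a. sw q (hp D a)"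
  have ND': "N D' = (\<Sum>a\<in>Arr D. \<Sum>b\<in>Arr D. F ?t' ?h' a b)"
    unfolding N_def AD by (intro sum.cong refl) (simp add: F_Fv tp')
  have BA: "{U,V} \<subseteq> Arr D" using UA by auto
  have rest: "(\<Sum>a\<in>Arr D - {U,V}. \<Sum>b\<in>Arr D - {U,V}. F ?t' ?h' a b) = (\<Sum>a\<in>Arr D - {U,V}. \<Sum>b\<in>Arr D - {U,V}. F ?t ?h a b)"
    by (intro sum.cong refl) (auto simp: F_Fv sw_id other)
  have mix: "(\<Sum>x\<in>Arr D - {U,V}. \<Sum>p\<in>{U,V}. F ?t' ?h' p x + F ?t' ?h' x p) = (\<Sum>x\<in>Arr D - {U,V}. \<Sum>p\<in>{U,V}. F ?t ?h p x + F ?t ?h x p)"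
  proof (intro sum.cong refl)
    fix x p assume x: "x \<in> Arr D - {U,V}"
    then have o: "?t x \<noteq> q" "?t x \<noteq> Suc q" "?h x \<noteq> q" "?h x \<noteq> Suc q" using other by auto
    have sx: "sw q (?t x) = ?t x" "sw q (?h x) = ?h x" using sw_id o by auto
    show "F ?t' ?h' p x + F ?t' ?h' x p = F ?t ?h p x + F ?t ?h x p"
      unfolding F_Fv sx using Fv_sw_cmp[OF o] by simp
  qed
  have BB: "(\<Sum>p\<in>{U,V}. \<Sum>r\<in>{U,V}. f p r) = f U V + f V U" if "\<And>a. f a a = 0" for f :: "nat \<Rightarrow> nat \<Rightarrow> nat"
    using UV that by simp
  have dist: "distinct [?t U, ?h U, ?t V, ?h V]"
    using pos_ne[OF wf UA UV] pos_ne2[OF wf UA(1)] pos_ne2[OF wf UA(2)] by auto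
  have ar: "(F ?t' ?h' U V + F ?t' ?h' V U + (F ?t ?h U V + F ?t ?h V U)) mod 2 = (if dir D U = dir D V then 0 else 1)"
    unfolding F_Fv dir_def using swap_arith[OF posU posV dist] by (simp add: add.assoc)
  have "N D' = (\<Sum>a\<in>Arr D - {U,V}. \<Sum>b\<in>Arr D - {U,V}. F ?t ?h a b) + (\<Sum>x\<in>Arr D - {U,V}. \<Sum>p\<in>{U,V}. F ?t ?h p x + F ?t ?h x p)
     + (F ?t' ?h' U V + F ?t' ?h' V U)"
    unfolding ND' sum_split2[OF finite_Arr BA] rest mix BB[of "F ?t' ?h'", OF F_diag] ..
  moreover have "N D = (\<Sum>a\<in>Arr D - {U,V}. \<Sum>b\<in>Arr D - {U,V}. F ?t ?h a b) + (\<Sum>x\<in>Arr D - {U,V}. \<Sum>p\<in>{U,V}. F ?t ?h p x + F ?t ?h x p)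
     + (F ?t ?h U V + F ?t ?h V U)"
    unfolding N_def sum_split2[OF finite_Arr BA] BB[of "F ?t ?h", OF F_diag] ..
  ultimately show "N D' mod 2 = (N D + (if dir D (aid u) = dir D (aid v) then 0 else 1)) mod 2"
    using mod_comb[OF ar] unfolding U_def V_def by simp
qed


definition dl :: "gauss \<Rightarrow> ep list \<Rightarrow> nat" where
  "dl D s = (if dir D (aid (s!0)) = dir D (aid (s!1)) then 0 else 1)"

lemma swaps_N:
  assumes "length xs = Suc (length segs)" "\<forall>s\<in>set segs. length s = 2 \<and> aid (s!0) \<noteq> aid (s!1)"
    "wf_gauss (P @ interl xs segs)"
  shows "wf_gauss (P @ interl xs (map rev segs)) \<and>
    N (P @ interl xs (map rev segs)) mod 2 = (N (P @ interl xs segs) + sum_list (map (dl (P @ interl xs segs)) segs)) mod 2"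
  using assms
proof (induction segs arbitrary: xs P)
  case Nil
  then obtain x0 where "xs = [x0]" by (cases xs) auto
  then show ?case using Nil by simp
next
  case (Cons s ss)
  obtain x0 xs' where xs: "xs = x0 # xs'" using Cons.prems(1) by (cases xs) auto
  have l: "length xs' = Suc (length ss)" using Cons.prems(1) xs by simp
  obtain u v where s: "s = [u,v]" "aid u \<noteq> aid v" using Cons.prems(2)
    by (cases s; cases "tl s") (auto simp: numeral_2_eq_2)
  define D where "D = P @ interl xs (s # ss)"
  define D1 where "D1 = (P @ x0 @ [v,u]) @ interl xs' ss"
  have D: "D = (P @ x0) @ u # v # interl xs' ss" unfolding D_def xs s by simp
  have D1: "D1 = (P @ x0) @ v # u # interl xs' ss" unfolding D1_def by simp
  have wf: "wf_gauss D" using Cons.prems(3) D_def by simp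
  note sw = swap_N[OF wf D s(2) D1]
  have IH: "wf_gauss ((P @ x0 @ [v,u]) @ interl xs' (map rev ss)) \<and>
    N ((P @ x0 @ [v,u]) @ interl xs' (map rev ss)) mod 2 = (N D1 + sum_list (map (dl D1) ss)) mod 2"
    using Cons.IH[OF l _ , of "P @ x0 @ [v,u]"] Cons.prems(2) sw(1) unfolding D1_def by simp
  have e: "P @ interl xs (map rev (s # ss)) = (P @ x0 @ [v,u]) @ interl xs' (map rev ss)"
    unfolding xs s by simp
  have inA: "aid (t!0) \<in> Arr D" "aid (t!1) \<in> Arr D" if "t \<in> set ss" for t
  proof -
    have "length t = 2" using Cons.prems(2) that by simp
    then have "t!0 \<in> set t" "t!1 \<in> set t" by auto
    then have "t!0 \<in> set D" "t!1 \<in> set D" using interl_set[OF Cons.prems(1)] that unfolding D_def by auto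
    then show "aid (t!0) \<in> Arr D" "aid (t!1) \<in> Arr D" unfolding Arr_def by auto
  qed
  have dleq: "map (dl D1) ss = map (dl D) ss"
    using sw(3) inA unfolding dl_def by (intro map_cong refl) auto
  have "N (P @ interl xs (map rev (s # ss))) mod 2 = (N D1 + sum_list (map (dl D) ss)) mod 2"
    using IH dleq e by simp
  also have "\<dots> = (N D1 mod 2 + sum_list (map (dl D) ss)) mod 2" by (simp add: mod_add_left_eq)
  also have "\<dots> = ((N D + dl D s) mod 2 + sum_list (map (dl D) ss)) mod 2"
    using sw(4) s unfolding dl_def by simp
  also have "\<dots> = (N D + sum_list (map (dl D) (s # ss))) mod 2" by (simp add: mod_add_left_eq add.assoc)
  finally show ?case using IH e D_def by simp
qed

lemma R3_N:
  assumes wf: "wf_gauss D" and r: "R3 D D'"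
  shows "N D mod 2 = N D' mod 2"
proof -
  obtain a b c sa sb sc xT xM xB segs xs where abc: "distinct [a, b, c]"
    and ms: "mset segs = {# (if xT then [Ep a True sa, Ep b True sb] else [Ep b True sb, Ep a True sa]),
                    (if xM then [Ep a False sa, Ep c True sc] else [Ep c True sc, Ep a False sa]),
                    (if xB then [Ep b False sb, Ep c False sc] else [Ep c False sc, Ep b False sb]) #}"
    and l: "length xs = Suc (length segs)" and D: "D = interl xs segs" and D': "D' = interl xs (map rev segs)"
    using r unfolding R3_def local_repl_def by blast
  let ?T = "(if xT then [Ep a True sa, Ep b True sb] else [Ep b True sb, Ep a True sa])"
  let ?M = "(if xM then [Ep a False sa, Ep c True sc] else [Ep c True sc, Ep a False sa])"
  let ?B = "(if xB then [Ep b False sb, Ep c False sc] else [Ep c False sc, Ep b False sb])"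
  have ss: "set segs = {?T, ?M, ?B}" using arg_cong[OF ms, of set_mset] by simp
  have segok: "\<forall>s\<in>set segs. length s = 2 \<and> aid (s!0) \<noteq> aid (s!1)" using abc unfolding ss by auto
  have main: "N D' mod 2 = (N D + sum_list (map (dl D) segs)) mod 2"
    using swaps_N[OF l segok, of "[]"] wf D D' by simp
  have "sum_list (map (dl D) segs) = sum_mset (image_mset (dl D) (mset segs))"
    by (metis mset_map sum_mset_sum_list)
  also have "\<dots> = dl D ?T + dl D ?M + dl D ?B" unfolding ms by simp
  also have "dl D ?T = (if dir D a = dir D b then 0 else 1)" unfolding dl_def by (cases xT) auto
  also have "dl D ?M = (if dir D a = dir D c then 0 else 1)" unfolding dl_def by (cases xM) auto
  also have "dl D ?B = (if dir D b = dir D c then 0 else 1)" unfolding dl_def by (cases xB) auto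
  finally have sl: "sum_list (map (dl D) segs) = (if dir D a = dir D b then 0 else 1) + (if dir D a = dir D c then 0 else 1) + (if dir D b = dir D c then 0 else 1)" .
  have "sum_list (map (dl D) segs) = 0 \<or> sum_list (map (dl D) segs) = 2"
    unfolding sl by (cases "dir D a"; cases "dir D b"; cases "dir D c") auto
  moreover have "\<And>z. z = 0 \<or> z = 2 \<Longrightarrow> (N D + z) mod 2 = N D mod 2" by auto
  ultimately have "(N D + sum_list (map (dl D) segs)) mod 2 = N D mod 2" by blast
  then show ?thesis using main by simp
qed

definition inn :: "nat \<Rightarrow> nat \<Rightarrow> nat \<Rightarrow> nat" where
  "inn tx hx z = (if tx < z \<and> z < hx \<or> hx < z \<and> z < tx then 1 else 0)"
lemma Fv_swap: "Fv ha ta hb tb = Fv ta ha tb hb" unfolding Fv_def by simp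
lemma bp_arith: "distinct [ta,ha,tx,hx] \<Longrightarrow>
  even (Fv ha ta tx hx + Fv tx hx ha ta + (Fv ta ha tx hx + Fv tx hx ta ha)) \<longleftrightarrow> even (inn tx hx ta + inn tx hx ha)"
  unfolding Fv_def inn_def
  by (cases "ta < ha"; cases "tx < hx"; cases "ta < tx"; cases "ta < hx"; cases "ha < tx"; cases "ha < hx") auto
lemma inn_adj: "z \<noteq> tx \<Longrightarrow> z \<noteq> hx \<Longrightarrow> Suc z \<noteq> tx \<Longrightarrow> Suc z \<noteq> hx \<Longrightarrow> inn tx hx (Suc z) = inn tx hx z"
  unfolding inn_def by auto
lemma ev: "even ((A::nat) + B) \<Longrightarrow> A mod 2 = B mod 2"
  by (metis even_add even_iff_mod_2_eq_zero odd_iff_mod_2_eq_one)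

lemma ev4: "even (Z1::nat) = even I1 \<Longrightarrow> even (Z2::nat) = even I2 \<Longrightarrow> even (Z3::nat) = even I3 \<Longrightarrow> even (Z4::nat) = even I4
  \<Longrightarrow> even (Z1 + Z2 + Z3 + Z4) = even (I1 + I2 + I3 + I4)"
  by simp

lemma flip_sel[simp]: "aid (flip_ep e) = aid e" "is_tail (flip_ep e) = (\<not> is_tail e)"
  unfolding flip_ep_def by simp_all

lemma BP_N:
  assumes wf: "wf_gauss D" and wf': "wf_gauss D'" and r: "BP D D'"
  shows "N D mod 2 = N D' mod 2"
proof -
  obtain p11 p12 p21 p22 s ori segs xs where dist: "distinct [p11, p12, p21, p22]"
    and ms: "mset segs = {# [Ep p11 True s, Ep p12 True (\<not> s)],
                    [Ep p22 True s, Ep p21 True (\<not> s)],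
                    (if ori then [Ep p11 False s, Ep p21 False (\<not> s)]
                            else [Ep p21 False (\<not> s), Ep p11 False s]),
                    (if ori then [Ep p22 False s, Ep p12 False (\<not> s)]
                            else [Ep p12 False (\<not> s), Ep p22 False s]) #}"
    and l: "length xs = Suc (length segs)" and D: "D = interl xs segs"
    and D': "D' = interl xs (map (map flip_ep) segs)"
    using r unfolding BP_def local_repl_def by blast
  let ?S1 = "[Ep p11 True s, Ep p12 True (\<not> s)]"
  let ?S2 = "[Ep p22 True s, Ep p21 True (\<not> s)]"
  let ?S3 = "(if ori then [Ep p11 False s, Ep p21 False (\<not> s)] else [Ep p21 False (\<not> s), Ep p11 False s])"
  let ?S4 = "(if ori then [Ep p22 False s, Ep p12 False (\<not> s)] else [Ep p12 False (\<not> s), Ep p22 False s])"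
  have ss: "set segs = {?S1, ?S2, ?S3, ?S4}" using arg_cong[OF ms, of set_mset] by simp
  define M where "M = {p11, p12, p21, p22}"
  have gap: "aid e \<notin> M" if "x \<in> set xs" "e \<in> set x" for x e
  proof -
    have "aid e \<noteq> p11" by (rule gap_aid[OF wf D l that, where sp=s]) (cases ori; auto simp: ss)
    moreover have "aid e \<noteq> p12" by (rule gap_aid[OF wf D l that, where sp="\<not> s"]) (cases ori; auto simp: ss)
    moreover have "aid e \<noteq> p21" by (rule gap_aid[OF wf D l that, where sp="\<not> s"]) (cases ori; auto simp: ss)
    moreover have "aid e \<noteq> p22" by (rule gap_aid[OF wf D l that, where sp=s]) (cases ori; auto simp: ss)
    ultimately show ?thesis unfolding M_def by auto
  qed
  define \<phi> where "\<phi> = (\<lambda>e. if aid e \<in> M then flip_ep e else e)"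
  have "map \<phi> D = interl (map (map \<phi>) xs) (map (map \<phi>) segs)" using interl_map[OF l] D by simp
  also have "map (map \<phi>) xs = xs"
    by (rule map_idI, rule map_idI) (use gap in \<open>auto simp: \<phi>_def\<close>)
  also have "map (map \<phi>) segs = map (map flip_ep) segs"
    by (rule map_cong[OF refl], rule map_cong[OF refl]) (cases ori; auto simp: ss \<phi>_def M_def)
  finally have D'm: "D' = map \<phi> D" using D' by simp
  have aphi: "aid (\<phi> e) = aid e" for e unfolding \<phi>_def by simp
  have AD: "Arr D' = Arr D" unfolding D'm Arr_def by (simp add: image_image aphi)
  have lenD: "length D' = length D" using D'm by simp
  have pos': "tp D' a = (if a \<in> M then hp D a else tp D a) \<and> hp D' a = (if a \<in> M then tp D a else hp D a)"
    if a: "a \<in> Arr D" for a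
  proof (cases "a \<in> M")
    case True
    have "tp D' a = hp D a" using hp_props[OF wf a] True
      by (intro tp_eqI[OF wf']) (auto simp: lenD D'm \<phi>_def)
    moreover have "hp D' a = tp D a" using tp_props[OF wf a] True
      by (intro hp_eqI[OF wf']) (auto simp: lenD D'm \<phi>_def)
    ultimately show ?thesis using True by simp
  next
    case False
    have "tp D' a = tp D a" using tp_props[OF wf a] False
      by (intro tp_eqI[OF wf']) (auto simp: lenD D'm \<phi>_def)
    moreover have "hp D' a = hp D a" using hp_props[OF wf a] False
      by (intro hp_eqI[OF wf']) (auto simp: lenD D'm \<phi>_def)
    ultimately show ?thesis using False by simp
  qed
  have MA: "M \<subseteq> Arr D" using interl_set[OF l] D ss unfolding M_def Arr_def by force
  let ?t = "tp D" and ?h = "hp D"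
  let ?t' = "\<lambda>a. if a \<in> M then hp D a else tp D a" and ?h' = "\<lambda>a. if a \<in> M then tp D a else hp D a"
  have ND': "N D' = (\<Sum>a\<in>Arr D. \<Sum>b\<in>Arr D. F ?t' ?h' a b)"
    unfolding N_def AD by (intro sum.cong refl) (simp add: F_Fv pos')
  obtain P1 R1 where d1: "D = P1 @ ?S1 @ R1" using interl_split[OF l, of ?S1] D ss by auto
  obtain P2 R2 where d2: "D = P2 @ ?S2 @ R2" using interl_split[OF l, of ?S2] D ss by auto
  obtain P3 R3 where d3: "D = P3 @ ?S3 @ R3" using interl_split[OF l, of ?S3] D ss by auto
  obtain P4 R4 where d4: "D = P4 @ ?S4 @ R4" using interl_split[OF l, of ?S4] D ss by auto
  have a1: "?t p12 = Suc (?t p11)"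
    using pos_tail[OF wf, of P1 "Ep p11 True s"] pos_tail[OF wf, of "P1 @ [Ep p11 True s]" "Ep p12 True (\<not> s)"] d1 by simp
  have a2: "?t p21 = Suc (?t p22)"
    using pos_tail[OF wf, of P2 "Ep p22 True s"] pos_tail[OF wf, of "P2 @ [Ep p22 True s]" "Ep p21 True (\<not> s)"] d2 by simp
  have a3: "?h p21 = Suc (?h p11) \<or> ?h p11 = Suc (?h p21)"
  proof (cases ori)
    case True then show ?thesis
      using pos_head[OF wf, of P3 "Ep p11 False s"] pos_head[OF wf, of "P3 @ [Ep p11 False s]" "Ep p21 False (\<not> s)"] d3 by simp
  next
    case False then show ?thesis
      using pos_head[OF wf, of P3 "Ep p21 False (\<not> s)"] pos_head[OF wf, of "P3 @ [Ep p21 False (\<not> s)]" "Ep p11 False s"] d3 by simp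
  qed
  have a4: "?h p12 = Suc (?h p22) \<or> ?h p22 = Suc (?h p12)"
  proof (cases ori)
    case True then show ?thesis
      using pos_head[OF wf, of P4 "Ep p22 False s"] pos_head[OF wf, of "P4 @ [Ep p22 False s]" "Ep p12 False (\<not> s)"] d4 by simp
  next
    case False then show ?thesis
      using pos_head[OF wf, of P4 "Ep p12 False (\<not> s)"] pos_head[OF wf, of "P4 @ [Ep p12 False (\<not> s)]" "Ep p22 False s"] d4 by simp
  qed
  have rest: "(\<Sum>a\<in>Arr D - M. \<Sum>b\<in>Arr D - M. F ?t' ?h' a b) = (\<Sum>a\<in>Arr D - M. \<Sum>b\<in>Arr D - M. F ?t ?h a b)"
    by (intro sum.cong refl) (simp add: F_Fv)
  have MM: "(\<Sum>p\<in>M. \<Sum>q\<in>M. F ?t' ?h' p q) = (\<Sum>p\<in>M. \<Sum>q\<in>M. F ?t ?h p q)"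
    by (intro sum.cong refl) (simp add: F_Fv Fv_swap)
  have mixx: "(\<Sum>p\<in>M. F ?t' ?h' p x + F ?t' ?h' x p) mod 2 = (\<Sum>p\<in>M. F ?t ?h p x + F ?t ?h x p) mod 2"
    if x: "x \<in> Arr D - M" for x
  proof -
    have xA: "x \<in> Arr D" and xM: "x \<notin> M" using x by auto
    have pA: "p \<in> Arr D" if "p \<in> M" for p using MA that by auto
    have pz: "even (F ?t' ?h' p x + F ?t' ?h' x p + (F ?t ?h p x + F ?t ?h x p)) = even (inn (?t x) (?h x) (?t p) + inn (?t x) (?h x) (?h p))"
      if p: "p \<in> M" for p
    proof -
      have "p \<noteq> x" using p xM by auto
      then have "distinct [?t p, ?h p, ?t x, ?h x]"
        using pos_ne[OF wf pA[OF p] xA] pos_ne2[OF wf pA[OF p]] pos_ne2[OF wf xA] by auto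
      then show ?thesis unfolding F_Fv using p xM bp_arith by simp
    qed
    have xo: "?t x \<noteq> ?t p \<and> ?t x \<noteq> ?h p \<and> ?h x \<noteq> ?t p \<and> ?h x \<noteq> ?h p" if p: "p \<in> M" for p
      using pos_ne[OF wf xA pA[OF p]] p xM by auto
    have ps: "p11 \<in> M" "p12 \<in> M" "p21 \<in> M" "p22 \<in> M" unfolding M_def by auto
    let ?i = "inn (?t x) (?h x)"
    have i1: "?i (?t p12) = ?i (?t p11)" using a1 xo[OF ps(1)] xo[OF ps(2)] inn_adj[of "?t p11" "?t x" "?h x"] by simp
    have i2: "?i (?t p21) = ?i (?t p22)" using a2 xo[OF ps(3)] xo[OF ps(4)] inn_adj[of "?t p22" "?t x" "?h x"] by simp
    have i3: "?i (?h p21) = ?i (?h p11)" using a3 xo[OF ps(1)] xo[OF ps(3)] inn_adj[of "?h p11" "?t x" "?h x"] inn_adj[of "?h p21" "?t x" "?h x"] by auto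
    have i4: "?i (?h p12) = ?i (?h p22)" using a4 xo[OF ps(2)] xo[OF ps(4)] inn_adj[of "?h p22" "?t x" "?h x"] inn_adj[of "?h p12" "?t x" "?h x"] by auto
    let ?Z = "\<lambda>p. F ?t' ?h' p x + F ?t' ?h' x p + (F ?t ?h p x + F ?t ?h x p)"
    have sM: "(\<Sum>p\<in>M. g p) = g p11 + g p12 + g p21 + g p22" for g :: "nat \<Rightarrow> nat"
      using dist unfolding M_def by (simp add: add.assoc)
    have "even (\<Sum>p\<in>M. ?Z p) = even (?i (?t p11) + ?i (?h p11) + (?i (?t p12) + ?i (?h p12)) + (?i (?t p21) + ?i (?h p21)) + (?i (?t p22) + ?i (?h p22)))"
      unfolding sM by (rule ev4) (use pz ps in auto)
    also have "\<dots> = even (2 * (?i (?t p11) + ?i (?h p11) + ?i (?t p22) + ?i (?h p22)))" unfolding i1 i2 i3 i4 by (simp add: algebra_simps)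
    also have "\<dots> = True" by simp
    finally have "even ((\<Sum>p\<in>M. F ?t' ?h' p x + F ?t' ?h' x p) + (\<Sum>p\<in>M. F ?t ?h p x + F ?t ?h x p))"
      by (simp add: sum.distrib)
    then show ?thesis by (rule ev)
  qed
  have mix: "(\<Sum>x\<in>Arr D - M. \<Sum>p\<in>M. F ?t' ?h' p x + F ?t' ?h' x p) mod 2 = (\<Sum>x\<in>Arr D - M. \<Sum>p\<in>M. F ?t ?h p x + F ?t ?h x p) mod 2"
  proof -
    let ?f = "\<lambda>x. \<Sum>p\<in>M. F ?t' ?h' p x + F ?t' ?h' x p"
    let ?g = "\<lambda>x. \<Sum>p\<in>M. F ?t ?h p x + F ?t ?h x p"
    have "(\<Sum>x\<in>Arr D - M. ?f x) mod 2 = (\<Sum>x\<in>Arr D - M. ?f x mod 2) mod 2" by (rule mod_sum_eq[symmetric])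
    also have "(\<Sum>x\<in>Arr D - M. ?f x mod 2) = (\<Sum>x\<in>Arr D - M. ?g x mod 2)"
      by (rule sum.cong[OF refl]) (rule mixx)
    also have "(\<Sum>x\<in>Arr D - M. ?g x mod 2) mod 2 = (\<Sum>x\<in>Arr D - M. ?g x) mod 2" by (rule mod_sum_eq)
    finally show ?thesis .
  qed
  have e1: "N D' = (\<Sum>a\<in>Arr D - M. \<Sum>b\<in>Arr D - M. F ?t ?h a b) + (\<Sum>x\<in>Arr D - M. \<Sum>p\<in>M. F ?t' ?h' p x + F ?t' ?h' x p) + (\<Sum>p\<in>M. \<Sum>q\<in>M. F ?t ?h p q)"
    unfolding ND' sum_split2[OF finite_Arr MA] rest MM ..
  have e2: "N D = (\<Sum>a\<in>Arr D - M. \<Sum>b\<in>Arr D - M. F ?t ?h a b) + (\<Sum>x\<in>Arr D - M. \<Sum>p\<in>M. F ?t ?h p x + F ?t ?h x p) + (\<Sum>p\<in>M. \<Sum>q\<in>M. F ?t ?h p q)"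
    unfolding N_def sum_split2[OF finite_Arr MA] ..
  show ?thesis unfolding e1 e2 by (rule mod_add_cong[OF mod_add_cong[OF refl mix[symmetric]] refl])
qed


lemma relabel_N:
  assumes wf: "wf_gauss D" and wf': "wf_gauss D'" and r: "relabel D D'"
  shows "N D = N D'"
proof -
  obtain f where f: "inj f" and D': "D' = map (\<lambda>e. Ep (f (aid e)) (is_tail e) (pos e)) D"
    using r unfolding relabel_def by blast
  have AD: "Arr D' = f ` Arr D" unfolding D' Arr_def by (simp add: image_image)
  have pos: "tp D' (f a) = tp D a" "hp D' (f a) = hp D a" if a: "a \<in> Arr D" for a
  proof -
    show "tp D' (f a) = tp D a" using tp_props[OF wf a] by (intro tp_eqI[OF wf']) (auto simp: D')
    show "hp D' (f a) = hp D a" using hp_props[OF wf a] by (intro hp_eqI[OF wf']) (auto simp: D')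
  qed
  have inj: "inj_on f (Arr D)" using f by (simp add: inj_on_def inj_def)
  have "N D' = (\<Sum>a\<in>Arr D. \<Sum>b\<in>Arr D. F (tp D') (hp D') (f a) (f b))"
    unfolding N_def AD sum.reindex[OF inj] by (simp add: sum.reindex[OF inj])
  also have "\<dots> = N D" unfolding N_def by (intro sum.cong refl) (simp add: F_Fv pos)
  finally show ?thesis by simp
qed

lemma step_N:
  assumes "ext_bp_step D D'"
  shows "N D mod 2 = N D' mod 2"
proof -
  have wf: "wf_gauss D" "wf_gauss D'" using assms unfolding ext_bp_step_def by auto
  have "R1 D D' \<or> R1 D' D \<or> R2 D D' \<or> R2 D' D \<or> R3 D D' \<or> R3 D' D \<or>
      relabel D D' \<or> relabel D' D \<or> BP D D' \<or> BP D' D" using assms unfolding ext_bp_step_def by auto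
  then show ?thesis
    using R1_N[OF wf(1)] R1_N[OF wf(2)] R2_N[OF wf(1)] R2_N[OF wf(2)] R3_N[OF wf(1)] R3_N[OF wf(2)]
      relabel_N[OF wf(1) wf(2)] relabel_N[OF wf(2) wf(1)] BP_N[OF wf(1) wf(2)] BP_N[OF wf(2) wf(1)]
    by metis
qed

theorem theorem3:
  fixes K1 K2 :: gauss
  assumes "ext_bp_step\<^sup>*\<^sup>* K1 K2"
  shows "(v21 K1 + v22 K1) mod 2 = (v21 K2 + v22 K2) mod 2"
  using assms
proof (induction rule: rtranclp_induct)
  case base
  then show ?case by simp
next
  case (step y z)
  have wf: "wf_gauss y" "wf_gauss z" using step(2) unfolding ext_bp_step_def by auto
  have "N y mod 2 = N z mod 2" using step_N[OF step(2)] .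
  then have "int (N y) mod 2 = int (N z) mod 2" by (metis of_nat_mod of_nat_numeral)
  then show ?case using step(3) link[OF wf(1)] link[OF wf(2)] by simp
qed

end
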